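(* Let $q\equiv 1\pmod 4$ be a prime power and let $n\ge 2$, $k\ge 0$ be integers. If $SP_q$ has property $P(n-1,k)$, then $Tr(SP_q)$ has property $P(n,k)$.
   Context: A signified graph is a simple graph with each edge labelled positive or negative. A signed vector of size $k$ is an element $\alpha=(\alpha_1,\dots,\alpha_k)\in\{+1,-1\}^k$. Given a sequence $X=(v_1,\dots,v_k)$ of $k$ distinct pairwise adjacent vertices, a vertex $u$ is an $\alpha$-successor of $X$ if for each $i$, $uv_i$ is an edge of sign $\alpha_i$; $S^\alpha(X)$ is the set of $\alpha$-successors. A signified graph has property $P(k,l)$ if $|S^\alpha(X)|\ge l$ for every sequence $X$ of $k$ distinct pairwise adjacent vertices and every signed vector $\alpha$ of size $k$. For $x\in\mathbb{F}_q^*$ let $\mathrm{sq}(x)=+1$ if $x$ is a square and $-1$ otherwise. $SP_q$ is the complete graph on $\mathbb{F}_q$ where $xy$ is negative iff $\mathrm{sq}(y-x)=-1$. $Tr(SP_q)$ has vertex set $\{u_i : u\in\mathbb{F}_q\cup\{\infty\},\ i\in\{0,1\}\}$; for $u\ne v$ in $\mathbb{F}_q$, $u_iv_j$ is an edge of sign $\mathrm{sq}(u-v)(-1)^{i+j}$; for $v\in\mathbb{F}_q$, $\infty_iv_j$ is an edge of sign $(-1)^{i+j}$; no other edges. *)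

theory Defs
  imports Main
begin

text \<open>A signified graph on the (finite) vertex type 'v is given by a symmetric,
irreflexive adjacency relation adj and a sign function sg (values +1 / -1),
where sg u v is the sign of the edge uv whenever adj u v holds.\<close>

definition successors :: "('v \<Rightarrow> 'v \<Rightarrow> bool) \<Rightarrow> ('v \<Rightarrow> 'v \<Rightarrow> int) \<Rightarrow> 'v list \<Rightarrow> int list \<Rightarrow> 'v set" where
  "successors adj sg xs \<alpha> =
     {u. \<forall>i < length xs. adj u (xs ! i) \<and> sg u (xs ! i) = \<alpha> ! i}"

definition prop_P :: "('v \<Rightarrow> 'v \<Rightarrow> bool) \<Rightarrow> ('v \<Rightarrow> 'v \<Rightarrow> int) \<Rightarrow> nat \<Rightarrow> nat \<Rightarrow> bool" where
  "prop_P adj sg k l \<longleftrightarrow>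
     (\<forall>xs \<alpha>. length xs = k \<and> distinct xs
        \<and> (\<forall>i < k. \<forall>j < k. i \<noteq> j \<longrightarrow> adj (xs ! i) (xs ! j))
        \<and> length \<alpha> = k \<and> set \<alpha> \<subseteq> {1, -1}
        \<longrightarrow> l \<le> card (successors adj sg xs \<alpha>))"

definition sq :: "'a::field \<Rightarrow> int" where
  "sq x = (if \<exists>y. y ^ 2 = x then 1 else -1)"

definition SP_adj :: "'a::field \<Rightarrow> 'a \<Rightarrow> bool" where
  "SP_adj x y \<longleftrightarrow> x \<noteq> y"

definition SP_sg :: "'a::field \<Rightarrow> 'a \<Rightarrow> int" where
  "SP_sg x y = sq (y - x)"

text \<open>Tr(SP_q): vertex u_i is encoded as (Some u, i) for u in the field and
(None, i) for infinity_i, with i :: bool (False = 0, True = 1).\<close>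
definition bsign :: "bool \<Rightarrow> bool \<Rightarrow> int" where
  "bsign i j = (if i = j then 1 else -1)"  \<comment> \<open>(-1)^(i+j)\<close>

definition Tr_adj :: "'a::field option \<times> bool \<Rightarrow> 'a option \<times> bool \<Rightarrow> bool" where
  "Tr_adj x y = (case (fst x, fst y) of
       (Some u, Some v) \<Rightarrow> u \<noteq> v
     | (None, Some v) \<Rightarrow> True
     | (Some u, None) \<Rightarrow> True
     | (None, None) \<Rightarrow> False)"

definition Tr_sg :: "'a::field option \<times> bool \<Rightarrow> 'a option \<times> bool \<Rightarrow> int" where
  "Tr_sg x y = (case (fst x, fst y) of
       (Some u, Some v) \<Rightarrow> sq (u - v) * bsign (snd x) (snd y)
     | _ \<Rightarrow> bsign (snd x) (snd y))"

end

theory Submission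
  imports Defs
begin
lemma sq_cases: "sq x = 1 \<or> sq x = -1" by (simp add: sq_def)
lemma sq_sq: "sq x * sq x = 1" by (simp add: sq_def)
lemma sq_inv: "sq (inverse (x::'a::field)) = sq x"
proof -
  have "(\<exists>y. y^2 = inverse x) \<longleftrightarrow> (\<exists>y. y^2 = x)"
  proof
    assume "\<exists>y. y^2 = inverse x" then obtain y where "y^2 = inverse x" by blast
    then have "(inverse y)^2 = x" by (simp add: power_inverse)
    then show "\<exists>y. y^2 = x" by blast
  next
    assume "\<exists>y. y^2 = x" then obtain y where "y^2 = x" by blast
    then have "(inverse y)^2 = inverse x" by (simp add: power_inverse)
    then show "\<exists>y. y^2 = inverse x" by blast
  qed
  then show ?thesis by (simp add: sq_def)
qed

lemma nonsq_prod:
  fixes a b :: "'a::{field,finite}"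
  assumes a0: "a \<noteq> 0" and b0: "b \<noteq> 0" and na: "\<not>(\<exists>y. y^2 = a)" and nb: "\<not>(\<exists>y. y^2 = b)"
  shows "\<exists>y. y^2 = a*b"
proof (cases "(1::'a) + 1 = 0")
  case True
  have "inj (\<lambda>y::'a. y^2)"
  proof (rule injI)
    fix x y :: 'a assume "x^2 = y^2"
    have "(x-y)^2 = x^2 + y^2 - (1+1)*x*y" by (simp add: power2_eq_square algebra_simps)
    also have "\<dots> = x^2 + y^2" using True by simp
    also have "\<dots> = (1+1)*x^2" using \<open>x^2 = y^2\<close> by (simp add: algebra_simps)
    also have "\<dots> = 0" using True by simp
    finally show "x = y" by simp
  qed
  then have "surj (\<lambda>y::'a. y^2)" by (simp add: finite_UNIV_inj_surj)
  then show ?thesis using na by (metis surjD)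
next
  case False
  define F where "F = (UNIV::'a set) - {0}"
  define S where "S = (\<lambda>y. y^2) ` F"
  have fin: "finite F" "finite S" by (auto simp: F_def S_def)
  have fib: "{y\<in>F. y^2 = z^2} = {z, -z}" if "z \<in> F" for z
  proof -
    have "y^2 = z^2 \<longleftrightarrow> y = z \<or> y = -z" for y :: 'a
      by (rule power2_eq_iff)
    then show ?thesis using that by (auto simp: F_def)
  qed
  have cfib: "card {y\<in>F. y^2 = s} = 2" if "s \<in> S" for s
  proof -
    obtain z where z: "z \<in> F" "s = z^2" using \<open>s\<in>S\<close> by (auto simp: S_def)
    have "z \<noteq> -z"
    proof
      assume "z = -z" then have "z + z = 0" by (metis neg_eq_iff_add_eq_0)
      moreover have "(1+1)*z = z + z" by (simp add: distrib_right)
      ultimately have "(1+1)*z = 0" by simp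
      then show False using False z by (auto simp: F_def)
    qed
    then show ?thesis using fib[OF z(1)] z by simp
  qed
  have FU: "F = (\<Union>s\<in>S. {y\<in>F. y^2 = s})" by (auto simp: S_def)
  then have "card F = (\<Sum>s\<in>S. card {y\<in>F. y^2 = s})"
  proof -
    have "card (\<Union>s\<in>S. {y\<in>F. y^2 = s}) = (\<Sum>s\<in>S. card {y\<in>F. y^2 = s})"
      by (rule card_UN_disjoint) (auto simp: fin)
    then show ?thesis using FU by simp
  qed
  also have "\<dots> = 2 * card S" using cfib by simp
  finally have cF: "card F = 2 * card S" .
  define N where "N = F - S"
  have SF: "S \<subseteq> F" by (auto simp: S_def F_def)
  have cN: "card N = card S" using cF card_Diff_subset[OF fin(2) SF] by (simp add: N_def)
  have sub: "(\<lambda>x. a*x) ` S \<subseteq> N"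
  proof
    fix t assume "t \<in> (\<lambda>x. a*x) ` S"
    then obtain r where r: "r \<in> F" "t = a * r^2" by (auto simp: S_def)
    have "t \<noteq> 0" using r a0 by (auto simp: F_def)
    moreover have "t \<notin> S"
    proof
      assume "t \<in> S" then obtain u where "a*r^2 = u^2" using r by (auto simp: S_def)
      then have "(u/r)^2 = a" using r by (auto simp: F_def power_divide field_simps)
      then show False using na by blast
    qed
    ultimately show "t \<in> N" by (auto simp: N_def F_def)
  qed
  have "inj_on (\<lambda>x. a*x) S" using a0 by (auto simp: inj_on_def)
  then have "card ((\<lambda>x. a*x) ` S) = card N" using cN card_image by metis
  then have eq: "(\<lambda>x. a*x) ` S = N" using card_subset_eq[OF _ sub] fin by (auto simp: N_def)
  have "b \<in> N" using b0 nb by (auto simp: N_def F_def S_def)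
  then obtain r where "b = a * r^2" using eq by (auto simp: S_def)
  then have "a*b = (a*r)^2" by (simp add: power2_eq_square algebra_simps)
  then show ?thesis by metis
qed

lemma sq_mult:
  fixes x y :: "'a::{field,finite}"
  assumes "x \<noteq> 0" "y \<noteq> 0"
  shows "sq (x*y) = sq x * sq y"
proof (cases "\<exists>u. u^2 = x")
  case True
  then obtain u where u: "u^2 = x" by blast
  then have u0: "u \<noteq> 0" using assms by auto
  have "(\<exists>v. v^2 = x*y) \<longleftrightarrow> (\<exists>v. v^2 = y)"
  proof
    assume "\<exists>v. v^2 = x*y" then obtain v where "v^2 = x*y" by blast
    then have "(v/u)^2 = y" using u u0 by (auto simp: power_divide field_simps)
    then show "\<exists>v. v^2 = y" by blast
  next
    assume "\<exists>v. v^2 = y" then obtain v where "v^2 = y" by blast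
    then have "(u*v)^2 = x*y" using u by (simp add: power_mult_distrib)
    then show "\<exists>v. v^2 = x*y" by blast
  qed
  then show ?thesis using True by (simp add: sq_def)
next
  case False
  show ?thesis
  proof (cases "\<exists>u. u^2 = y")
    case True
    then obtain u where u: "u^2 = y" by blast
    then have u0: "u \<noteq> 0" using assms by auto
    have "\<not>(\<exists>v. v^2 = x*y)"
    proof
      assume "\<exists>v. v^2 = x*y" then obtain v where "v^2 = x*y" by blast
      then have "(v/u)^2 = x" using u u0 by (auto simp: power_divide field_simps)
      then show False using False by blast
    qed
    then show ?thesis using True False by (simp add: sq_def)
  next
    case F2: False
    then show ?thesis using nonsq_prod[OF assms False F2] False by (simp add: sq_def)
  qed
qed

lemma pm_mult: "(x::int) \<in> {1,-1} \<Longrightarrow> y \<in> {1,-1} \<Longrightarrow> x*y \<in> {1,-1}" by auto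
lemma bsign_pm: "bsign a b \<in> {1,-1}" by (simp add: bsign_def)
lemma sq_pm: "sq a \<in> {1,-1}" by (simp add: sq_def)

lemma bsign_sq: "bsign a b * bsign a b = 1" by (simp add: bsign_def)
lemma bsign_trans: "bsign a b * bsign b c = bsign a c" by (simp add: bsign_def)
lemma bsign_sel: "c = 1 \<or> c = -1 \<Longrightarrow> bsign (if c = 1 then x else \<not> x) x = c"
  by (auto simp: bsign_def)

lemma Tr_adj_SS: "Tr_adj x y \<Longrightarrow> fst x = Some u \<Longrightarrow> fst y = Some w \<Longrightarrow> u \<noteq> w"
  by (simp add: Tr_adj_def)
lemma Tr_adj_NN: "Tr_adj x y \<Longrightarrow> fst x = None \<Longrightarrow> fst y \<noteq> None"
  by (cases "fst y") (auto simp: Tr_adj_def)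

lemma succ_le:
  fixes W :: "'b set" and f :: "'b \<Rightarrow> 'c::finite"
  assumes "inj_on f W" "f ` W \<subseteq> T" "finite W"
  shows "card W \<le> card T"
  by (metis assms(1,2) card_image card_mono finite)

theorem mainTheorem8:
  fixes n k :: nat
  assumes "card (UNIV :: 'a::{field,finite} set) mod 4 = 1"
    and "n \<ge> 2"
    and "prop_P (SP_adj :: 'a \<Rightarrow> 'a \<Rightarrow> bool) SP_sg (n - 1) k"
  shows "prop_P (Tr_adj :: 'a option \<times> bool \<Rightarrow> _ \<Rightarrow> bool) Tr_sg n k"
  unfolding prop_P_def
proof (intro allI impI, elim conjE)
  fix xs :: "('a option \<times> bool) list" and \<alpha> :: "int list"
  assume len: "length xs = n" and dist: "distinct xs"
    and adj: "\<forall>i<n. \<forall>j<n. i \<noteq> j \<longrightarrow> Tr_adj (xs ! i) (xs ! j)"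
    and lena: "length \<alpha> = n" and seta: "set \<alpha> \<subseteq> {1, -1}"
  have aval: "\<alpha>!i = 1 \<or> \<alpha>!i = -1" if "i < n" for i
    using seta nth_mem[of i \<alpha>] that lena by blast
  have asq: "\<alpha>!i * \<alpha>!i = 1" if "i < n" for i using aval[OF that] by auto
  have hyp: "k \<le> card (successors SP_adj SP_sg ys \<beta>)"
    if "length ys = n - 1" "distinct ys" "length \<beta> = n - 1" "set \<beta> \<subseteq> {1,-1}" for ys :: "'a list" and \<beta>
  proof -
    have "\<forall>i < n-1. \<forall>j < n-1. i \<noteq> j \<longrightarrow> SP_adj (ys!i) (ys!j)"
      using that(1,2) by (simp add: SP_adj_def nth_eq_iff_index_eq)
    then show ?thesis using assms(3) that unfolding prop_P_def by blast
  qed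
  define v where "v i = the (fst (xs!i))" for i
  define j where "j i = snd (xs!i)" for i
  let ?T = "successors Tr_adj Tr_sg xs \<alpha>"
  show "k \<le> card ?T"
  proof (cases "\<exists>i0<n. fst (xs!i0) = None")
    case True
    then obtain i0 where i0: "i0 < n" "fst (xs!i0) = None" by blast
    have xsi0: "xs!i0 = (None, j i0)" using i0 by (simp add: j_def prod_eq_iff)
    have xsS: "xs!i = (Some (v i), j i)" if "i < n" "i \<noteq> i0" for i
    proof -
      have "fst (xs!i) \<noteq> None" using Tr_adj_NN adj i0 that by metis
      then show ?thesis by (auto simp: v_def j_def prod_eq_iff)
    qed
    define idx where "idx l = (if l < i0 then l else Suc l)" for l
    have idx: "idx l < n" "idx l \<noteq> i0" if "l < n - 1" for l
      using that i0 by (auto simp: idx_def)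
    have idxinj: "idx l = idx l' \<Longrightarrow> l = l'" for l l' by (auto simp: idx_def split: if_splits)
    have idxsurj: "\<exists>l < n-1. idx l = i" if "i < n" "i \<noteq> i0" for i
    proof (cases "i < i0")
      case True then show ?thesis using that i0 by (intro exI[of _ i]) (auto simp: idx_def)
    next
      case False then show ?thesis using that i0 by (intro exI[of _ "i - 1"]) (auto simp: idx_def)
    qed
    have vinj: "v i \<noteq> v i'" if "i < n" "i' < n" "i \<noteq> i0" "i' \<noteq> i0" "i \<noteq> i'" for i i'
    proof -
      have "Tr_adj (xs!i) (xs!i')" using adj that by blast
      then show ?thesis using Tr_adj_SS[of "xs!i" "xs!i'" "v i" "v i'"] that xsS by simp
    qed
    define a where "a = (if \<alpha>!i0 = 1 then j i0 else \<not> j i0)"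
    have ba: "bsign a (j i0) = \<alpha>!i0" unfolding a_def by (rule bsign_sel[OF aval[OF i0(1)]])
    define ys where "ys = map (\<lambda>l. - v (idx l)) [0..<n-1]"
    define \<beta> where "\<beta> = map (\<lambda>l. \<alpha>!(idx l) * bsign a (j (idx l))) [0..<n-1]"
    have dys: "distinct ys" unfolding ys_def distinct_conv_nth
    proof (intro allI impI)
      fix l l' assume "l < length (map (\<lambda>l. - v (idx l)) [0..<n - 1])"
        "l' < length (map (\<lambda>l. - v (idx l)) [0..<n - 1])" "l \<noteq> l'"
      then have "l < n - 1" "l' < n - 1" "idx l \<noteq> idx l'" using idxinj by auto
      then have "v (idx l) \<noteq> v (idx l')" using vinj idx by blast
      then show "map (\<lambda>l. - v (idx l)) [0..<n - 1] ! l \<noteq> map (\<lambda>l. - v (idx l)) [0..<n - 1] ! l'"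
        using \<open>l < n - 1\<close> \<open>l' < n - 1\<close> by simp
    qed
    have sb: "set \<beta> \<subseteq> {1,-1}"
    proof -
      have "\<alpha>!(idx l) * bsign a (j (idx l)) \<in> {1,-1}" if "l<n-1" for l
        using aval[OF idx(1)[OF that]] by (auto simp: bsign_def)
      then show ?thesis unfolding \<beta>_def set_map set_upt by (intro image_subsetI) simp
    qed
    define W where "W = successors SP_adj SP_sg ys \<beta>"
    have kW: "k \<le> card W" unfolding W_def using hyp dys sb by (simp add: ys_def \<beta>_def)
    define \<Phi> where "\<Phi> w = (Some (- w), a)" for w :: 'a
    have "inj_on \<Phi> W" by (auto simp: inj_on_def \<Phi>_def)
    moreover have "\<Phi> ` W \<subseteq> ?T"
    proof (rule subsetI)
      fix x assume "x \<in> \<Phi> ` W"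
      then obtain w where w: "w \<in> W" "x = \<Phi> w" by blast
      have "Tr_adj x (xs!i) \<and> Tr_sg x (xs!i) = \<alpha>!i" if "i < n" for i
      proof (cases "i = i0")
        case True then show ?thesis using xsi0 ba w by (simp add: \<Phi>_def Tr_adj_def Tr_sg_def)
      next
        case False
        then obtain l where l: "l < n-1" "idx l = i" using idxsurj \<open>i < n\<close> by blast
        have "SP_adj w (ys!l) \<and> SP_sg w (ys!l) = \<beta>!l" using w(1) l(1)
          by (simp add: W_def successors_def ys_def)
        then have h: "w \<noteq> - v i" "sq (- v i - w) = \<alpha>!i * bsign a (j i)"
          using l by (auto simp: SP_adj_def SP_sg_def ys_def \<beta>_def)
        have e: "- w - v i = - v i - w" by (simp add: algebra_simps)
        have e2: "sq (- w - v i) = \<alpha>!i * bsign a (j i)" by (subst e) (rule h(2))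
        have "Tr_sg x (xs!i) = sq (- w - v i) * bsign a (j i)"
          using xsS[OF that False] w(2) by (simp add: \<Phi>_def Tr_sg_def)
        also have "\<dots> = \<alpha>!i * (bsign a (j i) * bsign a (j i))" using e2 by simp
        finally have "Tr_sg x (xs!i) = \<alpha>!i * (bsign a (j i) * bsign a (j i))" .
        then have "Tr_sg x (xs!i) = \<alpha>!i" by (simp add: bsign_sq)
        moreover have "- w \<noteq> v i"
        proof
          assume a: "- w = v i" have "w = - (- w)" by (rule minus_minus[symmetric]) then have "w = - v i" by (simp only: a)
          then show False using h(1) by simp
        qed
        then have "Tr_adj x (xs!i)" using xsS[OF that False] w(2) by (simp add: \<Phi>_def Tr_adj_def)
        ultimately show ?thesis by simp
      qed
      then show "x \<in> ?T" using len by (simp add: successors_def)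
    qed
    ultimately have "card W \<le> card ?T" by (intro succ_le) auto
    then show ?thesis using kW by simp
  next
    case False
    have xsS: "xs!i = (Some (v i), j i)" if "i < n" for i
      using False that by (auto simp: v_def j_def prod_eq_iff)
    have vinj: "v i \<noteq> v i'" if "i < n" "i' < n" "i \<noteq> i'" for i i'
    proof -
      have "Tr_adj (xs!i) (xs!i')" using adj that by blast
      then show ?thesis using Tr_adj_SS[of "xs!i" "xs!i'" "v i" "v i'"] that xsS by simp
    qed
    define d where "d l = v (Suc l) - v 0" for l
    define e where "e l = inverse (d l)" for l
    have d0: "d l \<noteq> 0" if "l < n - 1" for l using vinj[of "Suc l" 0] that by (auto simp: d_def)
    define ys where "ys = map e [0..<n-1]"
    define \<beta> where "\<beta> = map (\<lambda>l. \<alpha>!0 * \<alpha>!(Suc l) * bsign (j 0) (j (Suc l)) * sq (d l)) [0..<n-1]"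
    have dys: "distinct ys" unfolding ys_def distinct_conv_nth
    proof (intro allI impI)
      fix l l' assume "l < length (map e [0..<n-1])" "l' < length (map e [0..<n-1])" "l \<noteq> l'"
      then show "map e [0..<n - 1] ! l \<noteq> map e [0..<n - 1] ! l'"
        using vinj[of "Suc l" "Suc l'"] by (auto simp: e_def d_def)
    qed
    have sb: "set \<beta> \<subseteq> {1,-1}"
    proof -
      have "\<alpha>!0 * \<alpha>!(Suc l) * bsign (j 0) (j (Suc l)) * sq (d l) \<in> {1,-1}" if "l<n-1" for l
      proof -
        have "0 < n" "Suc l < n" using that assms(2) by auto
        then have "\<alpha>!0 \<in> {1,-1}" "\<alpha>!(Suc l) \<in> {1,-1}" using aval by auto
        then show ?thesis by (intro pm_mult bsign_pm sq_pm)
      qed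
      then show ?thesis unfolding \<beta>_def set_map set_upt by (intro image_subsetI) simp
    qed
    define W where "W = successors SP_adj SP_sg ys \<beta>"
    have kW: "k \<le> card W" unfolding W_def using hyp dys sb by (simp add: ys_def \<beta>_def)
    define aw where "aw w = (if \<alpha>!0 * sq w = 1 then j 0 else \<not> j 0)" for w :: 'a
    define a0 where "a0 = (if \<alpha>!0 = 1 then j 0 else \<not> j 0)"
    have n0: "0 < n" using assms(2) by simp
    have baw: "bsign (aw w) (j 0) = \<alpha>!0 * sq w" for w unfolding aw_def
      by (rule bsign_sel) (use aval[OF n0] sq_cases[of w] in auto)
    have ba0: "bsign a0 (j 0) = \<alpha>!0" unfolding a0_def by (rule bsign_sel[OF aval[OF n0]])
    define \<Phi> where "\<Phi> w = (if w = 0 then (None, a0) else (Some (v 0 + inverse w), aw w))" for w :: 'a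
    have "inj_on \<Phi> W" by (auto simp: inj_on_def \<Phi>_def split: if_splits)
    moreover have "\<Phi> ` W \<subseteq> ?T"
    proof (rule subsetI)
      fix x assume "x \<in> \<Phi> ` W"
      then obtain w where w: "w \<in> W" "x = \<Phi> w" by blast
      have wl: "SP_adj w (e l) \<and> sq (e l - w) = \<beta>!l" if "l < n - 1" for l
        using w(1) that by (simp add: W_def successors_def ys_def SP_sg_def)
      have "Tr_adj x (xs!i) \<and> Tr_sg x (xs!i) = \<alpha>!i" if "i < n" for i
      proof (cases "w = 0")
        case True
        then have x: "x = (None, a0)" using w by (simp add: \<Phi>_def)
        show ?thesis
        proof (cases i)
          case 0 then show ?thesis using x xsS[OF n0] ba0 by (simp add: Tr_adj_def Tr_sg_def)
        next
          case (Suc l)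
          have l: "l < n - 1" using Suc that by simp
          have "sq (e l) = \<beta>!l" using wl[OF l] True by simp
          moreover have "sq (e l) = sq (d l)" by (simp add: e_def sq_inv)
          ultimately have h1: "sq (d l) = \<beta>!l" by simp
          have h2: "\<beta>!l = \<alpha>!0 * \<alpha>!i * bsign (j 0) (j i) * sq (d l)"
            using l Suc by (simp add: \<beta>_def)
          have hh: "sq (d l) = (\<alpha>!0 * \<alpha>!i * bsign (j 0) (j i)) * sq (d l)" using h1 h2 by (rule trans)
          have "\<alpha>!0 * \<alpha>!i * bsign (j 0) (j i) = (\<alpha>!0 * \<alpha>!i * bsign (j 0) (j i)) * (sq (d l) * sq (d l))"
            by (simp only: sq_sq mult_1_right)
          also have "\<dots> = ((\<alpha>!0 * \<alpha>!i * bsign (j 0) (j i)) * sq (d l)) * sq (d l)" by (simp only: mult.assoc)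
          also have "\<dots> = sq (d l) * sq (d l)" by (simp only: hh[symmetric])
          also have "\<dots> = 1" by (rule sq_sq)
          finally have p: "\<alpha>!0 * \<alpha>!i * bsign (j 0) (j i) = 1" .
          have "bsign a0 (j i) = bsign a0 (j 0) * bsign (j 0) (j i)" by (simp add: bsign_trans)
          also have "\<dots> = \<alpha>!0 * bsign (j 0) (j i)" using ba0 by simp
          also have "\<dots> = \<alpha>!i * (\<alpha>!0 * \<alpha>!i * bsign (j 0) (j i))"
            using asq[OF that] by (simp add: algebra_simps)
          also have "\<dots> = \<alpha>!i" using p by simp
          finally show ?thesis using x xsS[OF that] by (simp add: Tr_adj_def Tr_sg_def)
        qed
      next
        case False
        then have x: "x = (Some (v 0 + inverse w), aw w)" using w by (simp add: \<Phi>_def)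
        show ?thesis
        proof (cases i)
          case 0
          have "Tr_sg x (xs!i) = sq (inverse w) * bsign (aw w) (j 0)"
            using x xsS[OF n0] 0 by (simp add: Tr_sg_def)
          also have "\<dots> = \<alpha>!0 * (sq w * sq w)" using baw by (simp add: sq_inv algebra_simps)
          finally show ?thesis using x xsS[OF n0] 0 False by (simp add: Tr_adj_def sq_sq)
        next
          case (Suc l)
          have l: "l < n - 1" using Suc that by simp
          have we: "w \<noteq> e l" "sq (e l - w) = \<beta>!l" using wl[OF l] by (auto simp: SP_adj_def)
          have dl: "d l \<noteq> 0" using d0[OF l] .
          have eq: "v 0 + inverse w - v i = inverse w * d l * (e l - w)"
            using False dl Suc by (simp add: e_def d_def field_simps)
          have ne: "e l - w \<noteq> 0" using we by simp
          have "sq (v 0 + inverse w - v i) = sq w * sq (d l) * sq (e l - w)"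
            using eq False dl ne by (simp add: sq_mult sq_inv)
          also have "\<dots> = sq w * sq (d l) * (\<alpha>!0 * \<alpha>!i * bsign (j 0) (j i) * sq (d l))"
            using we(2) l Suc by (simp add: \<beta>_def)
          finally have s1: "sq (v 0 + inverse w - v i) = sq w * sq (d l) * (\<alpha>!0 * \<alpha>!i * bsign (j 0) (j i) * sq (d l))" .
          have rp: "bsign (aw w) (j i) * bsign (j 0) (j i) = \<alpha>!0 * sq w"
            using baw[of w] bsign_trans[of "aw w" "j i" "j 0"] by (simp add: bsign_def split: if_splits)
          have "Tr_sg x (xs!i) = sq (v 0 + inverse w - v i) * bsign (aw w) (j i)"
            using x xsS[OF that] by (simp add: Tr_sg_def)
          also have "\<dots> = (sq w * sq w) * (sq (d l) * sq (d l)) * (\<alpha>!0 * \<alpha>!0) * \<alpha>!i"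
          proof -
            have "sq (v 0 + inverse w - v i) * bsign (aw w) (j i)
               = sq w * (sq (d l) * sq (d l)) * \<alpha>!0 * \<alpha>!i * (bsign (aw w) (j i) * bsign (j 0) (j i))"
              using s1 by (simp add: algebra_simps)
            then show ?thesis using rp by (simp add: algebra_simps)
          qed
          also have "\<dots> = \<alpha>!i" using asq[OF n0] by (simp add: sq_sq)
          finally have sg: "Tr_sg x (xs!i) = \<alpha>!i" .
          have "v 0 + inverse w \<noteq> v i" using eq False dl ne by auto
          then show ?thesis using sg x xsS[OF that] by (simp add: Tr_adj_def)
        qed
      qed
      then show "x \<in> ?T" using len by (simp add: successors_def)
    qed
    ultimately have "card W \<le> card ?T" by (intro succ_le) auto
    then show ?thesis using kW by simp
  qed
qed

end
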